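(* Let $g,g'\in G$ and $C\ge1$, and suppose $q_g\le C^2q_{g'}$ as quadratic forms on $\mathfrak g$. Then for all $\alpha,\beta\in\Sigma\cup\{0\}$, $$\big\|\mathrm{Ad}(k_gk_{g'}^{-1})_{\alpha,\beta}\big\|\le C\,e^{\alpha(\kappa(g'))-\beta(\kappa(g))}.$$
   Context: $G$ is a real semi-simple Lie group with finite center and Lie algebra $\mathfrak g$, $B$ its Killing form, $\theta$ a Cartan involution with $\mathfrak g=\mathfrak k\oplus\mathfrak p$ its $\pm1$ eigenspaces, $\mathfrak a\subset\mathfrak p$ maximal abelian, $\Sigma\subset\mathfrak a^*$ the restricted roots, $\mathfrak g=\mathfrak g_0\oplus\bigoplus_{\alpha\in\Sigma}\mathfrak g_\alpha$ the restricted root decomposition (with $\mathfrak g_\alpha=\{x:[a,x]=\alpha(a)x\ \forall a\in\mathfrak a\}$, and $0$ regarded as the weight of $\mathfrak g_0$), $K$ the maximal compact subgroup with Lie algebra $\mathfrak k$, $A=\exp\mathfrak a$. Fix a Weyl chamber $\mathcal W\subset\mathfrak a$. Every $g\in G$ has a KAK decomposition $g=k'_g\exp(\kappa(g))k_g$ with $k_g,k'_g\in K$ and $\kappa(g)\in\mathcal W$ (the Cartan projection); fix such a choice for $g$ and $g'$. The norm on $\mathfrak g$ is $\|x\|^2=-B(x,\theta x)$ (which is $\mathrm{Ad}(K)$-invariant, the $\mathfrak g_\alpha$ being mutually orthogonal), and $q_g(x)=\|\mathrm{Ad}(g)x\|^2$. For $H\in\mathrm{End}(\mathfrak g)$ and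 $\alpha,\beta\in\Sigma\cup\{0\}$, $H_{\alpha,\beta}:\mathfrak g_\alpha\to\mathfrak g_\beta$ denotes the map sending $x\in\mathfrak g_\alpha$ to the orthogonal projection of $H(x)$ onto $\mathfrak g_\beta$; $\|\cdot\|$ on it is the operator norm. *)

theory Defs
  imports "HOL-Analysis.Analysis" "HOL-Algebra.Group"
begin

text \<open>Finite-dimensional real Lie algebras: the underlying space is a type of class
euclidean_space (its inner product is only used as auxiliary coordinates, e.g. for the trace).\<close>

definition lie_algebra :: "('g::euclidean_space \<Rightarrow> 'g \<Rightarrow> 'g) \<Rightarrow> bool" where
  "lie_algebra br \<longleftrightarrow> (\<forall>x. linear (br x)) \<and> (\<forall>y. linear (\<lambda>x. br x y)) \<and>
     (\<forall>x. br x x = 0) \<and>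
     (\<forall>x y z. br x (br y z) + br y (br z x) + br z (br x y) = 0)"

definition lie_ideal :: "('g::euclidean_space \<Rightarrow> 'g \<Rightarrow> 'g) \<Rightarrow> 'g set \<Rightarrow> bool" where
  "lie_ideal br I \<longleftrightarrow> subspace I \<and> (\<forall>x i. i \<in> I \<longrightarrow> br x i \<in> I)"

fun derived_series :: "('g::euclidean_space \<Rightarrow> 'g \<Rightarrow> 'g) \<Rightarrow> 'g set \<Rightarrow> nat \<Rightarrow> 'g set" where
  "derived_series br I 0 = I"
| "derived_series br I (Suc n) =
     span {br a b | a b. a \<in> derived_series br I n \<and> b \<in> derived_series br I n}"

definition solvable_ideal :: "('g::euclidean_space \<Rightarrow> 'g \<Rightarrow> 'g) \<Rightarrow> 'g set \<Rightarrow> bool" where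
  "solvable_ideal br I \<longleftrightarrow> lie_ideal br I \<and> (\<exists>n. derived_series br I n = {0})"

definition semisimple_lie_algebra :: "('g::euclidean_space \<Rightarrow> 'g \<Rightarrow> 'g) \<Rightarrow> bool" where
  "semisimple_lie_algebra br \<longleftrightarrow> lie_algebra br \<and>
     (\<forall>I. solvable_ideal br I \<longrightarrow> I = {0})"

definition trace_op :: "('g::euclidean_space \<Rightarrow> 'g) \<Rightarrow> real" where
  "trace_op f = (\<Sum>b\<in>Basis. inner (f b) b)"

definition killing :: "('g::euclidean_space \<Rightarrow> 'g \<Rightarrow> 'g) \<Rightarrow> 'g \<Rightarrow> 'g \<Rightarrow> real" where
  "killing br x y = trace_op (\<lambda>z. br x (br y z))"

definition lie_automorphism :: "('g::euclidean_space \<Rightarrow> 'g \<Rightarrow> 'g) \<Rightarrow> ('g \<Rightarrow> 'g) \<Rightarrow> bool" where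
  "lie_automorphism br f \<longleftrightarrow> linear f \<and> bij f \<and> (\<forall>x y. f (br x y) = br (f x) (f y))"

definition cartan_involution :: "('g::euclidean_space \<Rightarrow> 'g \<Rightarrow> 'g) \<Rightarrow> ('g \<Rightarrow> 'g) \<Rightarrow> bool" where
  "cartan_involution br \<theta> \<longleftrightarrow> lie_automorphism br \<theta> \<and> (\<forall>x. \<theta> (\<theta> x) = x) \<and>
     (\<forall>x. x \<noteq> 0 \<longrightarrow> - killing br x (\<theta> x) > 0)"

definition kpart :: "('g::euclidean_space \<Rightarrow> 'g) \<Rightarrow> 'g set" where
  "kpart \<theta> = {x. \<theta> x = x}"

definition ppart :: "('g::euclidean_space \<Rightarrow> 'g) \<Rightarrow> 'g set" where
  "ppart \<theta> = {x. \<theta> x = - x}"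

definition abelian_sub :: "('g::euclidean_space \<Rightarrow> 'g \<Rightarrow> 'g) \<Rightarrow> 'g set \<Rightarrow> bool" where
  "abelian_sub br S \<longleftrightarrow> subspace S \<and> (\<forall>a\<in>S. \<forall>b\<in>S. br a b = 0)"

definition max_abelian_in_p ::
  "('g::euclidean_space \<Rightarrow> 'g \<Rightarrow> 'g) \<Rightarrow> ('g \<Rightarrow> 'g) \<Rightarrow> 'g set \<Rightarrow> bool" where
  "max_abelian_in_p br \<theta> A \<longleftrightarrow> abelian_sub br A \<and> A \<subseteq> ppart \<theta> \<and>
     (\<forall>B. abelian_sub br B \<and> A \<subseteq> B \<and> B \<subseteq> ppart \<theta> \<longrightarrow> B = A)"

text \<open>Elements of \<open>\<aa>\<^sup>*\<close> are represented by real functions on 'g which are linear on A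
  and vanish outside A (the values outside A are never used).\<close>
definition dual_a :: "'g::euclidean_space set \<Rightarrow> ('g \<Rightarrow> real) \<Rightarrow> bool" where
  "dual_a A \<alpha> \<longleftrightarrow> (\<forall>x\<in>A. \<forall>y\<in>A. \<alpha> (x + y) = \<alpha> x + \<alpha> y) \<and>
     (\<forall>c. \<forall>x\<in>A. \<alpha> (c *\<^sub>R x) = c * \<alpha> x) \<and> (\<forall>x. x \<notin> A \<longrightarrow> \<alpha> x = 0)"

definition root_space ::
  "('g::euclidean_space \<Rightarrow> 'g \<Rightarrow> 'g) \<Rightarrow> 'g set \<Rightarrow> ('g \<Rightarrow> real) \<Rightarrow> 'g set" where
  "root_space br A \<alpha> = {x. \<forall>a\<in>A. br a x = \<alpha> a *\<^sub>R x}"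

definition restricted_roots ::
  "('g::euclidean_space \<Rightarrow> 'g \<Rightarrow> 'g) \<Rightarrow> 'g set \<Rightarrow> ('g \<Rightarrow> real) set" where
  "restricted_roots br A = {\<alpha>. dual_a A \<alpha> \<and> (\<exists>a\<in>A. \<alpha> a \<noteq> 0) \<and> root_space br A \<alpha> \<noteq> {0}}"

definition weights :: "('g::euclidean_space \<Rightarrow> 'g \<Rightarrow> 'g) \<Rightarrow> 'g set \<Rightarrow> ('g \<Rightarrow> real) set" where
  "weights br A = insert (\<lambda>_. 0) (restricted_roots br A)"

definition regular_set :: "('g::euclidean_space \<Rightarrow> 'g \<Rightarrow> 'g) \<Rightarrow> 'g set \<Rightarrow> 'g set" where
  "regular_set br A = {a\<in>A. \<forall>\<alpha>\<in>restricted_roots br A. \<alpha> a \<noteq> 0}"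

definition weyl_chamber :: "('g::euclidean_space \<Rightarrow> 'g \<Rightarrow> 'g) \<Rightarrow> 'g set \<Rightarrow> 'g set \<Rightarrow> bool" where
  "weyl_chamber br A W \<longleftrightarrow> (\<exists>a0\<in>regular_set br A.
      W = closure (connected_component_set (regular_set br A) a0))"

definition th_inner :: "('g::euclidean_space \<Rightarrow> 'g \<Rightarrow> 'g) \<Rightarrow> ('g \<Rightarrow> 'g) \<Rightarrow> 'g \<Rightarrow> 'g \<Rightarrow> real" where
  "th_inner br \<theta> x y = - killing br x (\<theta> y)"

definition th_norm :: "('g::euclidean_space \<Rightarrow> 'g \<Rightarrow> 'g) \<Rightarrow> ('g \<Rightarrow> 'g) \<Rightarrow> 'g \<Rightarrow> real" where
  "th_norm br \<theta> x = sqrt (- killing br x (\<theta> x))"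

definition qform :: "('g::euclidean_space \<Rightarrow> 'g \<Rightarrow> 'g) \<Rightarrow> ('g \<Rightarrow> 'g) \<Rightarrow> ('g \<Rightarrow> 'g) \<Rightarrow> 'g \<Rightarrow> real" where
  "qform br \<theta> F x = (th_norm br \<theta> (F x))\<^sup>2"

definition th_proj :: "('g::euclidean_space \<Rightarrow> 'g \<Rightarrow> 'g) \<Rightarrow> ('g \<Rightarrow> 'g) \<Rightarrow> 'g set \<Rightarrow> 'g \<Rightarrow> 'g" where
  "th_proj br \<theta> V y = (THE z. z \<in> V \<and> (\<forall>w\<in>V. th_inner br \<theta> (y - z) w = 0))"

definition block_norm ::
  "('g::euclidean_space \<Rightarrow> 'g \<Rightarrow> 'g) \<Rightarrow> ('g \<Rightarrow> 'g) \<Rightarrow> 'g set \<Rightarrow> ('g \<Rightarrow> 'g)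
    \<Rightarrow> ('g \<Rightarrow> real) \<Rightarrow> ('g \<Rightarrow> real) \<Rightarrow> real" where
  "block_norm br \<theta> A H \<alpha> \<beta> =
     Sup {th_norm br \<theta> (th_proj br \<theta> (root_space br A \<beta>) (H x)) | x.
            x \<in> root_space br A \<alpha> \<and> th_norm br \<theta> x \<le> 1}"

definition op_exp :: "('g::euclidean_space \<Rightarrow> 'g) \<Rightarrow> 'g \<Rightarrow> 'g" where
  "op_exp f = (\<lambda>x. \<Sum>n. (1 / fact n) *\<^sub>R (f ^^ n) x)"

text \<open>Group-level data (abstracted): a group Gr, the adjoint representation Ad into the
  automorphisms of the Lie algebra, a subgroup K whose adjoint action commutes with theta,
  and the map expA : a -> A with Ad(exp a) = exp(ad a).\<close>
definition semisimple_group_data ::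
  "('G, 'b) monoid_scheme \<Rightarrow> ('g::euclidean_space \<Rightarrow> 'g \<Rightarrow> 'g) \<Rightarrow> ('g \<Rightarrow> 'g) \<Rightarrow> 'g set
    \<Rightarrow> ('G \<Rightarrow> 'g \<Rightarrow> 'g) \<Rightarrow> 'G set \<Rightarrow> ('g \<Rightarrow> 'G) \<Rightarrow> bool" where
  "semisimple_group_data Gr br \<theta> A Ad K expA \<longleftrightarrow>
     group Gr \<and> semisimple_lie_algebra br \<and> cartan_involution br \<theta> \<and> max_abelian_in_p br \<theta> A \<and>
     (\<forall>g\<in>carrier Gr. lie_automorphism br (Ad g)) \<and>
     (\<forall>g\<in>carrier Gr. \<forall>h\<in>carrier Gr. Ad (g \<otimes>\<^bsub>Gr\<^esub> h) = Ad g \<circ> Ad h) \<and>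
     subgroup K Gr \<and> (\<forall>k\<in>K. Ad k \<circ> \<theta> = \<theta> \<circ> Ad k) \<and>
     (\<forall>a\<in>A. expA a \<in> carrier Gr \<and> Ad (expA a) = op_exp (br a))"

definition KAK_decomp ::
  "('G, 'b) monoid_scheme \<Rightarrow> 'G set \<Rightarrow> ('g \<Rightarrow> 'G) \<Rightarrow> 'g set \<Rightarrow> 'G \<Rightarrow> 'G \<Rightarrow> 'g \<Rightarrow> 'G \<Rightarrow> bool" where
  "KAK_decomp Gr K expA W g k' \<kappa> k \<longleftrightarrow> k \<in> K \<and> k' \<in> K \<and> \<kappa> \<in> W \<and>
     g = k' \<otimes>\<^bsub>Gr\<^esub> expA \<kappa> \<otimes>\<^bsub>Gr\<^esub> k"

end

theory Submission
  imports Defs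
begin


lemma trace_diff: "trace_op (\<lambda>z. f z - g z) = trace_op f - trace_op g"
  by (simp add: trace_op_def inner_diff_left sum_subtractf)

lemma lin_expand:
  assumes "linear X"
  shows "X y = (\<Sum>c\<in>Basis. inner y c *\<^sub>R X c)"
proof -
  have "X y = X (\<Sum>c\<in>Basis. inner y c *\<^sub>R c)" by (simp add: euclidean_representation)
  also have "\<dots> = (\<Sum>c\<in>Basis. inner y c *\<^sub>R X c)"
    using assms by (simp add: linear_sum linear_scale)
  finally show ?thesis .
qed

lemma trace_comm:
  assumes X: "linear X" and Y: "linear Y"
  shows "trace_op (\<lambda>z. X (Y z)) = trace_op (\<lambda>z. Y (X z))"
proof -
  have "trace_op (\<lambda>z. X (Y z)) = (\<Sum>b\<in>Basis. \<Sum>c\<in>Basis. inner (Y b) c * inner (X c) b)"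
    unfolding trace_op_def by (subst lin_expand[OF X]) (simp add: inner_sum_left)
  also have "\<dots> = (\<Sum>c\<in>Basis. \<Sum>b\<in>Basis. inner (X c) b * inner (Y b) c)"
    by (subst sum.swap) (simp add: mult.commute)
  also have "\<dots> = trace_op (\<lambda>z. Y (X z))"
    unfolding trace_op_def by (subst lin_expand[OF Y]) (simp add: inner_sum_left)
  finally show ?thesis .
qed



context fixes br :: "'g::euclidean_space \<Rightarrow> 'g \<Rightarrow> 'g" assumes L: "lie_algebra br"
begin

lemma linL: "linear (br x)" using L by (simp add: lie_algebra_def)
lemma linR: "linear (\<lambda>x. br x y)" using L by (simp add: lie_algebra_def)

lemma br_add1: "br (a + b) y = br a y + br b y" using linear_add[OF linR] by blast
lemma br_add2: "br x (a + b) = br x a + br x b" using linear_add[OF linL] by blast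
lemma br_scale1: "br (c *\<^sub>R a) y = c *\<^sub>R br a y" using linear_scale[OF linR] by blast
lemma br_scale2: "br x (c *\<^sub>R a) = c *\<^sub>R br x a" using linear_scale[OF linL] by blast
lemma br_diff1: "br (a - b) y = br a y - br b y" using linear_diff[OF linR] by blast
lemma br_diff2: "br x (a - b) = br x a - br x b" using linear_diff[OF linL] by blast
lemma br_neg1: "br (- a) y = - br a y" using linear_neg[OF linR] by blast
lemma br_zero2: "br x 0 = 0" using linear_0[OF linL] by blast

lemma antisym: "br x y = - br y x"
proof -
  have "br (x + y) (x + y) = 0" using L by (simp add: lie_algebra_def)
  moreover have "br x x = 0" "br y y = 0" using L by (auto simp add: lie_algebra_def)
  ultimately have "br x y + br y x = 0" by (simp add: br_add1 br_add2 add.commute)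
  then show ?thesis by (simp add: eq_neg_iff_add_eq_0)
qed

lemma jac: "br (br a z) w = br a (br z w) - br z (br a w)"
proof -
  have "br a (br z w) + br z (br w a) + br w (br a z) = 0" using L by (simp add: lie_algebra_def)
  moreover have "br w (br a z) = - br (br a z) w" by (rule antisym)
  moreover have "br z (br w a) = - br z (br a w)"
    by (metis antisym br_neg1 linL linear_neg)
  ultimately show ?thesis by (simp add: algebra_simps)
qed

lemma killing_sym: "killing br x y = killing br y x"
  unfolding killing_def by (rule trace_comm[OF linL linL])

lemma killing_lin1: "linear (\<lambda>x. killing br x y)"
  unfolding killing_def trace_op_def
  by (rule linearI) (simp_all add: br_add1 br_scale1 inner_add_left sum.distrib sum_distrib_left)

lemma killing_lin2: "linear (\<lambda>y. killing br x y)"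
  unfolding killing_def trace_op_def
  by (rule linearI) (simp_all add: br_add1 br_scale1 br_add2 br_scale2 inner_add_left sum.distrib sum_distrib_left)

lemma killing_ad: "killing br (br a z) u = - killing br z (br a u)"
proof -
  have lc: "\<And>p q. linear (\<lambda>w. br p (br q w))" by (rule linear_compose[OF linL linL, unfolded o_def])
  have "killing br (br a z) u = trace_op (\<lambda>w. br a (br z (br u w))) - trace_op (\<lambda>w. br z (br a (br u w)))"
    unfolding killing_def by (subst trace_diff[symmetric]) (simp add: jac)
  moreover have "killing br z (br a u) = trace_op (\<lambda>w. br z (br a (br u w))) - trace_op (\<lambda>w. br z (br u (br a w)))"
    unfolding killing_def by (subst trace_diff[symmetric]) (simp add: jac br_diff2)
  moreover have "trace_op (\<lambda>w. br a (br z (br u w))) = trace_op (\<lambda>w. br z (br u (br a w)))"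
    by (rule trace_comm[OF linL lc])
  ultimately show ?thesis by simp
qed

lemma killing_aut:
  assumes f: "lie_automorphism br f"
  shows "killing br (f x) (f y) = killing br x y"
proof -
  have lf: "linear f" and bf: "bij f" and hf: "\<And>x y. f (br x y) = br (f x) (f y)"
    using f by (auto simp: lie_automorphism_def)
  define g where "g = inv_into UNIV f"
  have lg: "linear g" unfolding g_def
    using inj_linear_imp_inv_linear[OF lf] bf by (simp add: bij_def)
  have fg: "f (g z) = z" for z unfolding g_def using bf by (simp add: bij_def surj_f_inv_f)
  have gf: "g (f z) = z" for z unfolding g_def using bf by (simp add: bij_def inv_f_f)
  have "br (f x) (br (f y) z) = f (br x (br y (g z)))" for z
    by (simp add: hf fg)
  then have "killing br (f x) (f y) = trace_op (\<lambda>z. f (br x (br y (g z))))"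
    by (simp add: killing_def)
  also have "\<dots> = trace_op (\<lambda>z. br x (br y (g (f z))))"
    by (rule trace_comm[OF lf]) (rule linear_compose[OF lg linear_compose[OF linL linL], unfolded o_def])
  also have "\<dots> = killing br x y" by (simp add: gf killing_def)
  finally show ?thesis .
qed

end


lemma proj_exists:
  fixes ip :: "'g::euclidean_space \<Rightarrow> 'g \<Rightarrow> real"
  assumes l1: "\<And>y. linear (\<lambda>x. ip x y)" and l2: "\<And>x. linear (\<lambda>y. ip x y)"
    and pos: "\<And>x. x \<noteq> 0 \<Longrightarrow> ip x x > 0" and V: "subspace V"
  shows "\<exists>z\<in>V. \<forall>w\<in>V. ip (y - z) w = 0"
proof -
  obtain B where BV: "B \<subseteq> V" and iB: "independent B" and VB: "V \<subseteq> span B" and cB: "card B = dim V"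
    by (rule basis_exists)
  have fB: "finite B" using iB by (rule finiteI_independent)
  have spanB: "span B = V" using BV VB V by (metis span_minimal subset_antisym)
  have orth: "ip u w = 0" if "\<forall>b\<in>B. ip u b = 0" "w \<in> V" for u w
  proof -
    have "subspace {w. ip u w = 0}"
      using l2[of u] by (simp add: subspace_def linear_add linear_scale linear_0)
    moreover have "w \<in> span B" using that spanB by simp
    ultimately show ?thesis using that(1) by (metis (mono_tags, lifting) mem_Collect_eq span_minimal subsetD subsetI)
  qed
  define M where "M z = (\<Sum>b\<in>B. ip z b *\<^sub>R b)" for z
  have lM: "linear M" unfolding M_def
    by (rule linearI) (simp_all add: linear_add[OF l1] linear_scale[OF l1] scaleR_add_left sum.distrib scaleR_sum_right)
  have Mker: "\<forall>b\<in>B. ip u b = 0" if "M u = 0" for u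
  proof (rule ccontr)
    assume "\<not> (\<forall>b\<in>B. ip u b = 0)"
    then have "dependent B" using that fB unfolding M_def by (subst dependent_finite[OF fB]) auto
    then show False using iB by simp
  qed
  have MV: "M z \<in> V" for z unfolding M_def using BV V
    by (intro subspace_sum subspace_scale) auto
  have inj: "inj_on M V"
  proof (rule inj_onI)
    fix x y assume x: "x \<in> V" and y: "y \<in> V" and e: "M x = M y"
    then have "M (x - y) = 0" using lM by (simp add: linear_diff)
    then have "\<forall>b\<in>B. ip (x - y) b = 0" by (rule Mker)
    then have "ip (x - y) (x - y) = 0" using orth x y V by (simp add: subspace_diff)
    then show "x = y" using pos[of "x - y"] by (cases "x = y") auto
  qed
  have "M ` V = V"
  proof (rule subspace_dim_equal)
    show "subspace (M ` V)" by (rule linear_subspace_image[OF lM V])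
    show "M ` V \<subseteq> V" using MV by auto
    have "dim (M ` V) = dim V"
      by (rule dim_image_eq[OF lM]) (use inj V in \<open>simp add: span_eq_iff[THEN iffD2]\<close>)
    then show "dim V \<le> dim (M ` V)" by simp
  qed (use V in auto)
  then obtain z where z: "z \<in> V" "M z = M y" using MV[of y] by (metis imageE)
  then have "M (y - z) = 0" using lM by (simp add: linear_diff)
  then have "\<forall>b\<in>B. ip (y - z) b = 0" by (rule Mker)
  then show ?thesis using z orth by blast
qed

lemma proj_unique:
  fixes ip :: "'g::euclidean_space \<Rightarrow> 'g \<Rightarrow> real"
  assumes l1: "\<And>y. linear (\<lambda>x. ip x y)"
    and pos: "\<And>x. x \<noteq> 0 \<Longrightarrow> ip x x > 0" and V: "subspace V"
    and z1: "z1 \<in> V" "\<forall>w\<in>V. ip (y - z1) w = 0"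
    and z2: "z2 \<in> V" "\<forall>w\<in>V. ip (y - z2) w = 0"
  shows "z1 = z2"
proof -
  have d: "z2 - z1 \<in> V" using z1 z2 V by (simp add: subspace_diff)
  have "ip (z2 - z1) (z2 - z1) = ip (y - z1) (z2 - z1) - ip (y - z2) (z2 - z1)"
    using linear_diff[OF l1, of "y - z1" "y - z2" "z2 - z1"] by simp
  also have "\<dots> = 0" using z1 z2 d by simp
  finally show ?thesis using pos[of "z2 - z1"] by (cases "z1 = z2") auto
qed



context fixes br :: "'g::euclidean_space \<Rightarrow> 'g \<Rightarrow> 'g" and \<theta> :: "'g \<Rightarrow> 'g"
  assumes L: "lie_algebra br" and Cth: "cartan_involution br \<theta>"
begin

lemma th_aut: "lie_automorphism br \<theta>" using Cth by (simp add: cartan_involution_def)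
lemma th_lin: "linear \<theta>" using th_aut by (simp add: lie_automorphism_def)
lemma th_th: "\<theta> (\<theta> x) = x" using Cth by (simp add: cartan_involution_def)

lemma ip_sym: "th_inner br \<theta> x y = th_inner br \<theta> y x"
  unfolding th_inner_def
  using killing_aut[OF L th_aut, of "\<theta> x" y] killing_sym[OF L, of "\<theta> x" y] by (simp add: th_th)

lemma ip_lin1: "linear (\<lambda>x. th_inner br \<theta> x y)"
  unfolding th_inner_def using killing_lin1[OF L] by (simp add: linear_compose_neg)

lemma ip_lin2: "linear (\<lambda>y. th_inner br \<theta> x y)"
  unfolding th_inner_def
  using linear_compose_neg[OF linear_compose[OF th_lin killing_lin2[OF L]]] by (simp add: o_def)

lemma ip_add1: "th_inner br \<theta> (a + b) c = th_inner br \<theta> a c + th_inner br \<theta> b c"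
  using linear_add[OF ip_lin1] by blast
lemma ip_add2: "th_inner br \<theta> c (a + b) = th_inner br \<theta> c a + th_inner br \<theta> c b"
  using linear_add[OF ip_lin2] by blast
lemma ip_diff1: "th_inner br \<theta> (a - b) c = th_inner br \<theta> a c - th_inner br \<theta> b c"
  using linear_diff[OF ip_lin1] by blast
lemma ip_scale1: "th_inner br \<theta> (r *\<^sub>R a) c = r * th_inner br \<theta> a c"
  using linear_scale[OF ip_lin1] by simp
lemma ip_scale2: "th_inner br \<theta> c (r *\<^sub>R a) = r * th_inner br \<theta> c a"
  using linear_scale[OF ip_lin2] by simp

lemma ip_pos: "x \<noteq> 0 \<Longrightarrow> th_inner br \<theta> x x > 0"
  using Cth by (simp add: cartan_involution_def th_inner_def)

lemma ip_nonneg: "th_inner br \<theta> x x \<ge> 0"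
  using ip_pos[of x] linear_0[OF ip_lin1] by (cases "x = 0") auto

lemma th_norm_ip: "th_norm br \<theta> x = sqrt (th_inner br \<theta> x x)"
  by (simp add: th_norm_def th_inner_def)

lemma ad_sym:
  assumes a: "a \<in> ppart \<theta>"
  shows "th_inner br \<theta> (br a z) w = th_inner br \<theta> z (br a w)"
proof -
  have ta: "\<theta> a = - a" using a by (simp add: ppart_def)
  have "\<theta> (br a w) = - br a (\<theta> w)"
    using th_aut ta by (simp add: lie_automorphism_def br_neg1[OF L])
  then show ?thesis unfolding th_inner_def
    using killing_ad[OF L, of a z "\<theta> w"] linear_neg[OF killing_lin2[OF L, of z]] by simp
qed

lemma aut_ip:
  assumes f: "lie_automorphism br f" and c: "f \<circ> \<theta> = \<theta> \<circ> f"
  shows "th_inner br \<theta> (f x) (f y) = th_inner br \<theta> x y"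
proof -
  have "\<theta> (f y) = f (\<theta> y)" using c by (metis comp_apply)
  then show ?thesis unfolding th_inner_def using killing_aut[OF L f] by simp
qed

lemma proj_char:
  assumes V: "subspace V"
  shows "th_proj br \<theta> V y \<in> V \<and> (\<forall>w\<in>V. th_inner br \<theta> (y - th_proj br \<theta> V y) w = 0)"
proof -
  obtain z where z: "z \<in> V" "\<forall>w\<in>V. th_inner br \<theta> (y - z) w = 0"
    using proj_exists[OF ip_lin1 ip_lin2 ip_pos V] by blast
  have "th_proj br \<theta> V y = z" unfolding th_proj_def
  proof (rule the_equality)
    show "z \<in> V \<and> (\<forall>w\<in>V. th_inner br \<theta> (y - z) w = 0)" using z by simp
    fix z' assume "z' \<in> V \<and> (\<forall>w\<in>V. th_inner br \<theta> (y - z') w = 0)"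
    then show "z' = z" using proj_unique[OF ip_lin1 ip_pos V, of z' y z] z by simp
  qed
  then show ?thesis using z by simp
qed

lemma proj_eq:
  assumes V: "subspace V" and z: "z \<in> V" "\<forall>w\<in>V. th_inner br \<theta> (y - z) w = 0"
  shows "th_proj br \<theta> V y = z"
  using proj_char[OF V, of y] z proj_unique[OF ip_lin1 ip_pos V, of "th_proj br \<theta> V y" y z] by simp

lemma proj_le:
  assumes V: "subspace V"
  shows "th_norm br \<theta> (th_proj br \<theta> V y) \<le> th_norm br \<theta> y"
proof -
  define p where "p = th_proj br \<theta> V y"
  have pV: "p \<in> V" and o: "th_inner br \<theta> (y - p) p = 0"
    using proj_char[OF V, of y] by (auto simp: p_def)
  have o2: "th_inner br \<theta> p (y - p) = 0" using o ip_sym by simp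
  have "th_inner br \<theta> y y = th_inner br \<theta> (p + (y - p)) (p + (y - p))" by simp
  also have "\<dots> = th_inner br \<theta> p p + th_inner br \<theta> p (y - p) + th_inner br \<theta> (y - p) p
      + th_inner br \<theta> (y - p) (y - p)"
    by (simp only: ip_add1 ip_add2)
  finally have "th_inner br \<theta> p p \<le> th_inner br \<theta> y y" using o o2 ip_nonneg[of "y - p"] by simp
  then show ?thesis unfolding th_norm_ip p_def[symmetric] by simp
qed

lemma th_norm_scale: "th_norm br \<theta> (c *\<^sub>R x) = \<bar>c\<bar> * th_norm br \<theta> x"
proof -
  have "th_inner br \<theta> (c *\<^sub>R x) (c *\<^sub>R x) = c\<^sup>2 * th_inner br \<theta> x x"
    by (simp add: ip_scale1 ip_scale2 power2_eq_square)
  then show ?thesis by (simp add: th_norm_ip real_sqrt_mult)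
qed

end


lemma funpow_bound:
  fixes f :: "'a::real_normed_vector \<Rightarrow> 'a"
  assumes "\<forall>x. norm (f x) \<le> norm x * K" "K > 0"
  shows "norm ((f ^^ n) x) \<le> K ^ n * norm x"
proof (induction n)
  case 0 then show ?case by (simp only: funpow.simps(1) id_apply power_0 mult_1)
next
  case (Suc n)
  have "norm ((f ^^ Suc n) x) \<le> norm ((f ^^ n) x) * K" using assms(1)[rule_format, of "(f ^^ n) x"] by (simp only: funpow.simps(2) comp_apply)
  also have "\<dots> \<le> K ^ n * norm x * K" using Suc assms(2) by (simp add: mult_right_mono)
  finally show ?case by (simp add: algebra_simps)
qed

lemma op_exp_summable:
  fixes f :: "'g::euclidean_space \<Rightarrow> 'g"
  assumes "linear f"
  shows "summable (\<lambda>n. (1 / fact n) *\<^sub>R (f ^^ n) x)"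
proof -
  have "bounded_linear f" using assms by (simp add: linear_conv_bounded_linear)
  then obtain K where K: "K > 0" "\<forall>x. norm (f x) \<le> norm x * K"
    using bounded_linear.pos_bounded by blast
  show ?thesis
  proof (rule summable_comparison_test')
    show "summable (\<lambda>n. inverse (fact n) * K ^ n * norm x)"
      by (rule summable_mult2[OF summable_exp])
    fix n :: nat
    have "norm ((1 / fact n) *\<^sub>R (f ^^ n) x) = inverse (fact n) * norm ((f ^^ n) x)"
      by (simp add: divide_inverse)
    also have "\<dots> \<le> inverse (fact n) * (K ^ n * norm x)"
      using funpow_bound[OF K(2) K(1)] by (intro mult_left_mono) auto
    finally show "norm ((1 / fact n) *\<^sub>R (f ^^ n) x) \<le> inverse (fact n) * K ^ n * norm x"
      by (simp add: mult.assoc)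
  qed
qed

lemma funpow_eig:
  assumes "linear f" "f x = c *\<^sub>R x"
  shows "(f ^^ n) x = c ^ n *\<^sub>R x"
  by (induction n) (simp_all add: assms linear_scale[OF assms(1)])

lemma exp_sum_eq: "(\<Sum>n. 1 / fact n * c ^ n) = exp (c::real)"
  using sums_unique[OF exp_converges[of c]] by (simp add: divide_inverse mult.commute)

lemma exp_sum_eq2: "(\<Sum>n. c ^ n / fact n) = exp (c::real)"
  using exp_sum_eq[of c] by simp

lemma op_exp_eig:
  assumes "linear f" "f x = c *\<^sub>R x"
  shows "op_exp f x = exp c *\<^sub>R x"
proof -
  have "op_exp f x = (\<Sum>n. (1 / fact n * c ^ n) *\<^sub>R x)"
    unfolding op_exp_def by (simp add: funpow_eig[OF assms])
  also have "\<dots> = (\<Sum>n. 1 / fact n * c ^ n) *\<^sub>R x"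
    by (rule suminf_scaleR_left[symmetric]) (use summable_exp[of c] in \<open>simp add: divide_inverse mult.commute\<close>)
  finally show ?thesis by (simp only: exp_sum_eq)
qed

context fixes br :: "'g::euclidean_space \<Rightarrow> 'g \<Rightarrow> 'g" and \<theta> :: "'g \<Rightarrow> 'g"
  assumes L: "lie_algebra br" and Cth: "cartan_involution br \<theta>"
begin

lemma op_exp_ip:
  assumes lf: "linear f" and sym: "\<And>z w. th_inner br \<theta> (f z) w = th_inner br \<theta> z (f w)"
    and eig: "f w = c *\<^sub>R w"
  shows "th_inner br \<theta> (op_exp f z) w = exp c * th_inner br \<theta> z w"
proof -
  have bl: "bounded_linear (\<lambda>y. th_inner br \<theta> y w)"
    using ip_lin1[OF L Cth] by (simp add: linear_conv_bounded_linear)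
  have pw: "th_inner br \<theta> ((f ^^ n) z) w = c ^ n * th_inner br \<theta> z w" for n
  proof (induction n arbitrary: z)
    case 0 then show ?case by simp
  next
    case (Suc n)
    have "th_inner br \<theta> ((f ^^ Suc n) z) w = th_inner br \<theta> ((f ^^ n) (f z)) w"
      by (simp add: funpow_Suc_right del: funpow.simps)
    also have "\<dots> = c ^ n * th_inner br \<theta> (f z) w" by (rule Suc)
    also have "\<dots> = c ^ Suc n * th_inner br \<theta> z w"
      by (simp add: sym eig ip_scale2[OF L Cth])
    finally show ?case .
  qed
  have "th_inner br \<theta> (op_exp f z) w = (\<Sum>n. th_inner br \<theta> ((1 / fact n) *\<^sub>R (f ^^ n) z) w)"
    unfolding op_exp_def by (rule bounded_linear.suminf[OF bl op_exp_summable[OF lf]])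
  also have "\<dots> = (\<Sum>n. 1 / fact n * c ^ n * th_inner br \<theta> z w)"
    by (simp add: ip_scale1[OF L Cth] pw mult.assoc)
  also have "\<dots> = (\<Sum>n. 1 / fact n * c ^ n) * th_inner br \<theta> z w"
    by (rule suminf_mult2[symmetric]) (use summable_exp[of c] in \<open>simp add: divide_inverse mult.commute\<close>)
  finally show ?thesis by (simp only: exp_sum_eq)
qed

end


lemma root_space_subspace:
  assumes L: "lie_algebra br"
  shows "subspace (root_space br A \<beta>)"
  unfolding subspace_def root_space_def
  by (auto simp: br_zero2[OF L] br_add2[OF L] br_scale2[OF L] scaleR_add_right)

theorem lemma3:
  fixes Gr :: "('G, 'b) monoid_scheme"
    and br :: "'g::euclidean_space \<Rightarrow> 'g \<Rightarrow> 'g" and \<theta> :: "'g \<Rightarrow> 'g"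
    and A W :: "'g set" and Ad :: "'G \<Rightarrow> 'g \<Rightarrow> 'g" and K :: "'G set"
    and expA :: "'g \<Rightarrow> 'G"
    and g g' k k' h h' :: 'G and \<kappa> \<kappa>' :: 'g and C :: real
  assumes data: "semisimple_group_data Gr br \<theta> A Ad K expA"
    and chamber: "weyl_chamber br A W"
    and KAK: "\<forall>x\<in>carrier Gr. \<exists>k1 k1' \<kappa>1. KAK_decomp Gr K expA W x k1' \<kappa>1 k1"
    and g: "g \<in> carrier Gr" and g': "g' \<in> carrier Gr"
    and dec_g: "KAK_decomp Gr K expA W g k' \<kappa> k"
    and dec_g': "KAK_decomp Gr K expA W g' h' \<kappa>' h"
    and C: "C \<ge> 1"
    and q: "\<forall>x. qform br \<theta> (Ad g) x \<le> C\<^sup>2 * qform br \<theta> (Ad g') x"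
  shows "\<forall>\<alpha>\<in>weights br A. \<forall>\<beta>\<in>weights br A.
           block_norm br \<theta> A (Ad (k \<otimes>\<^bsub>Gr\<^esub> inv\<^bsub>Gr\<^esub> h)) \<alpha> \<beta> \<le> C * exp (\<alpha> \<kappa>' - \<beta> \<kappa>)"
proof (intro ballI)
  fix \<alpha> \<beta> assume "\<alpha> \<in> weights br A" "\<beta> \<in> weights br A"
  have grp: "group Gr" and L: "lie_algebra br" and Cth: "cartan_involution br \<theta>"
    and mab: "max_abelian_in_p br \<theta> A"
    and aut: "\<And>x. x \<in> carrier Gr \<Longrightarrow> lie_automorphism br (Ad x)"
    and hom: "\<And>x y. x \<in> carrier Gr \<Longrightarrow> y \<in> carrier Gr \<Longrightarrow> Ad (x \<otimes>\<^bsub>Gr\<^esub> y) = Ad x \<circ> Ad y"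
    and sK: "subgroup K Gr" and Kc: "\<And>x. x \<in> K \<Longrightarrow> Ad x \<circ> \<theta> = \<theta> \<circ> Ad x"
    and eA: "\<And>a. a \<in> A \<Longrightarrow> expA a \<in> carrier Gr \<and> Ad (expA a) = op_exp (br a)"
    using data by (auto simp: semisimple_group_data_def semisimple_lie_algebra_def)
  have subA: "subspace A" and Ap: "A \<subseteq> ppart \<theta>"
    using mab by (auto simp: max_abelian_in_p_def abelian_sub_def)
  have WA: "W \<subseteq> A"
  proof -
    obtain a0 where "W = closure (connected_component_set (regular_set br A) a0)"
      using chamber by (auto simp: weyl_chamber_def)
    moreover have "connected_component_set (regular_set br A) a0 \<subseteq> A"
      using connected_component_subset[of "regular_set br A" a0] by (auto simp: regular_set_def)
    ultimately show ?thesis using closed_subspace[OF subA] by (simp add: closure_minimal)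
  qed
  have kK: "k \<in> K" and k'K: "k' \<in> K" and \<kappa>W: "\<kappa> \<in> W"
    and gdec: "g = k' \<otimes>\<^bsub>Gr\<^esub> expA \<kappa> \<otimes>\<^bsub>Gr\<^esub> k"
    using dec_g by (auto simp: KAK_decomp_def)
  have hK: "h \<in> K" and h'K: "h' \<in> K" and \<kappa>'W: "\<kappa>' \<in> W"
    and g'dec: "g' = h' \<otimes>\<^bsub>Gr\<^esub> expA \<kappa>' \<otimes>\<^bsub>Gr\<^esub> h"
    using dec_g' by (auto simp: KAK_decomp_def)
  have KG: "K \<subseteq> carrier Gr" using sK by (rule subgroup.subset)
  have \<kappa>A: "\<kappa> \<in> A" and \<kappa>'A: "\<kappa>' \<in> A" using \<kappa>W \<kappa>'W WA by auto
  have kc: "k \<in> carrier Gr" "k' \<in> carrier Gr" "h \<in> carrier Gr" "h' \<in> carrier Gr"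
    using kK k'K hK h'K KG by auto
  have ihc: "inv\<^bsub>Gr\<^esub> h \<in> carrier Gr" using kc grp by (simp add: group.inv_closed)
  have ec: "expA \<kappa> \<in> carrier Gr" "expA \<kappa>' \<in> carrier Gr" using eA \<kappa>A \<kappa>'A by auto
  have Ad1: "Ad \<one>\<^bsub>Gr\<^esub> x = x" for x
  proof -
    have oc: "\<one>\<^bsub>Gr\<^esub> \<in> carrier Gr" using grp by (simp add: group.is_monoid monoid.one_closed)
    have "Ad \<one>\<^bsub>Gr\<^esub> = Ad \<one>\<^bsub>Gr\<^esub> \<circ> Ad \<one>\<^bsub>Gr\<^esub>"
      using hom[OF oc oc] grp oc by (simp add: group.is_monoid monoid.l_one)
    then have "Ad \<one>\<^bsub>Gr\<^esub> (Ad \<one>\<^bsub>Gr\<^esub> x) = Ad \<one>\<^bsub>Gr\<^esub> x" by (metis comp_apply)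
    moreover have "inj (Ad \<one>\<^bsub>Gr\<^esub>)" using aut[OF oc] by (simp add: lie_automorphism_def bij_def)
    ultimately show ?thesis by (simp add: inj_eq)
  qed
  define E where "E = op_exp (br \<kappa>)"
  define E' where "E' = op_exp (br \<kappa>')"
  define H where "H = Ad (k \<otimes>\<^bsub>Gr\<^esub> inv\<^bsub>Gr\<^esub> h)"
  define V where "V = root_space br A \<beta>"
  define P where "P = th_proj br \<theta> V"
  have V: "subspace V" unfolding V_def by (rule root_space_subspace[OF L])
  have Adg: "Ad g = Ad k' \<circ> E \<circ> Ad k"
    using gdec hom kc ec eA[OF \<kappa>A] grp by (simp add: E_def group.is_monoid monoid.m_closed)
  have Adg': "Ad g' = Ad h' \<circ> E' \<circ> Ad h"
    using g'dec hom kc ec eA[OF \<kappa>'A] grp by (simp add: E'_def group.is_monoid monoid.m_closed)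
  have normK: "th_norm br \<theta> (Ad u v) = th_norm br \<theta> v" if "u \<in> K" for u v
    using aut_ip[OF L Cth aut Kc[OF that], of v v] that KG
    by (auto simp: th_norm_ip[OF L Cth])
  have bound: "th_norm br \<theta> (P (H x)) \<le> C * exp (\<alpha> \<kappa>' - \<beta> \<kappa>)"
    if x: "x \<in> root_space br A \<alpha>" and nx: "th_norm br \<theta> x \<le> 1" for x
  proof -
    define y where "y = Ad (inv\<^bsub>Gr\<^esub> h) x"
    define z where "z = H x"
    have "Ad k y = z" unfolding y_def z_def H_def using hom[OF kc(1) ihc] by simp
    have "Ad h y = Ad (h \<otimes>\<^bsub>Gr\<^esub> inv\<^bsub>Gr\<^esub> h) x" unfolding y_def using hom[OF kc(3) ihc] by simp
    also have "\<dots> = x" using grp kc by (simp add: group.r_inv Ad1)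
    finally have hy: "Ad h y = x" .
    have "E' x = exp (\<alpha> \<kappa>') *\<^sub>R x" unfolding E'_def
      by (rule op_exp_eig[OF linL[OF L]]) (use x \<kappa>'A in \<open>simp add: root_space_def\<close>)
    then have "qform br \<theta> (Ad g') y = (exp (\<alpha> \<kappa>') * th_norm br \<theta> x)\<^sup>2"
      using Adg' hy normK[OF h'K] by (simp add: qform_def th_norm_scale[OF L Cth])
    also have "\<dots> \<le> (exp (\<alpha> \<kappa>'))\<^sup>2"
    proof -
      have "0 \<le> th_norm br \<theta> x" by (simp add: th_norm_ip[OF L Cth] ip_nonneg[OF L Cth])
      then have "exp (\<alpha> \<kappa>') * th_norm br \<theta> x \<le> exp (\<alpha> \<kappa>')" using nx by (simp add: mult_left_le)
      then show ?thesis using \<open>0 \<le> th_norm br \<theta> x\<close> by (intro power_mono) auto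
    qed
    finally have q2: "qform br \<theta> (Ad g') y \<le> (exp (\<alpha> \<kappa>'))\<^sup>2" .
    have "qform br \<theta> (Ad g) y = (th_norm br \<theta> (E z))\<^sup>2"
      using Adg \<open>Ad k y = z\<close> normK[OF k'K] by (simp add: qform_def)
    then have "(th_norm br \<theta> (E z))\<^sup>2 \<le> (C * exp (\<alpha> \<kappa>'))\<^sup>2"
      using q[rule_format, of y] q2 C
      by (metis (no_types, opaque_lifting) dual_order.trans mult_left_mono power_mult_distrib zero_le_power2)
    then have Ez: "th_norm br \<theta> (E z) \<le> C * exp (\<alpha> \<kappa>')"
      by (rule power2_le_imp_le) (use C in simp)
    define e where "e = exp (\<beta> \<kappa>)"
    have pc: "P z \<in> V \<and> (\<forall>w\<in>V. th_inner br \<theta> (z - P z) w = 0)"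
      unfolding P_def by (rule proj_char[OF L Cth V])
    have Eip: "th_inner br \<theta> (E z) w = e * th_inner br \<theta> z w" if "w \<in> V" for w
      unfolding E_def e_def
    proof (rule op_exp_ip[OF L Cth linL[OF L]])
      show "th_inner br \<theta> (br \<kappa> u) v = th_inner br \<theta> u (br \<kappa> v)" for u v
        using ad_sym[OF L Cth] \<kappa>A Ap by auto
      show "br \<kappa> w = \<beta> \<kappa> *\<^sub>R w" using that \<kappa>A by (simp add: V_def root_space_def)
    qed
    have "P (E z) = e *\<^sub>R P z" unfolding P_def
    proof (rule proj_eq[OF L Cth V])
      show "e *\<^sub>R th_proj br \<theta> V z \<in> V" using pc V unfolding P_def by (simp add: subspace_scale)
      show "\<forall>w\<in>V. th_inner br \<theta> (E z - e *\<^sub>R th_proj br \<theta> V z) w = 0"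
        using pc Eip unfolding P_def
        by (simp add: ip_diff1[OF L Cth] ip_scale1[OF L Cth] right_diff_distrib)
    qed
    then have "e * th_norm br \<theta> (P z) = th_norm br \<theta> (P (E z))"
      by (simp add: th_norm_scale[OF L Cth] e_def)
    also have "\<dots> \<le> th_norm br \<theta> (E z)" unfolding P_def by (rule proj_le[OF L Cth V])
    also have "\<dots> \<le> C * exp (\<alpha> \<kappa>')" by (rule Ez)
    finally have "th_norm br \<theta> (P z) \<le> C * exp (\<alpha> \<kappa>') / e"
      by (simp add: e_def field_simps)
    then show ?thesis by (simp add: z_def e_def exp_diff)
  qed
  show "block_norm br \<theta> A (Ad (k \<otimes>\<^bsub>Gr\<^esub> inv\<^bsub>Gr\<^esub> h)) \<alpha> \<beta> \<le> C * exp (\<alpha> \<kappa>' - \<beta> \<kappa>)"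
    unfolding block_norm_def H_def[symmetric] V_def[symmetric] P_def[symmetric]
  proof (rule cSup_least)
    have "0 \<in> root_space br A \<alpha>" by (simp add: root_space_def br_zero2[OF L])
    moreover have "th_norm br \<theta> 0 \<le> 1" by (simp add: th_norm_def killing_def trace_op_def br_zero2[OF L] linear_0[OF linR[OF L]])
    ultimately show "{th_norm br \<theta> (P (H x)) |x. x \<in> root_space br A \<alpha> \<and> th_norm br \<theta> x \<le> 1} \<noteq> {}"
      by blast
  qed (use bound in auto)
qed


end
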